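(* Let $M \in \mathbb{Z}^+$ and let $p_1$ be a real number with $0.5 \le p_1 < \frac{M+1.5}{M+3}$. Set $p_2 = 1 - p_1$ and $\delta = \frac{p_1 - 0.5}{M}$, and define for $m \in \{0,1,\dots,M\}$ the prior weights $$\omega_{\mathrm{FE}}(m) = p_1 - \delta m, \qquad \omega_{\mathrm{HPO}}(m) = p_2 + \delta m.$$ Define integer sequences $N_{\mathrm{FE}}(m), N_{\mathrm{HPO}}(m)$ for $m = 0,1,\dots,M$ by $N_{\mathrm{FE}}(0) = N_{\mathrm{HPO}}(0) = 0$ and, for $0 \le m \le M-1$, $$I(m+1) = \begin{cases} 1, & \text{if } \dfrac{\omega_{\mathrm{FE}}(m)}{1+N_{\mathrm{FE}}(m)} > \dfrac{\omega_{\mathrm{HPO}}(m)}{1+N_{\mathrm{HPO}}(m)},\\[2mm] 0, & \text{otherwise,}\end{cases}$$ $$N_{\mathrm{FE}}(m+1) = N_{\mathrm{FE}}(m) + I(m+1), \qquad N_{\mathrm{HPO}}(m+1) = N_{\mathrm{HPO}}(m) + 1 - I(m+1).$$ Then $$N_{\mathrm{FE}}(M),\ N_{\mathrm{HPO}}(M) \in \left\{ \left\lfloor \tfrac{M}{2} \right\rfloor, \left\lceil \tfrac{M}{2} \right\rceil \right\}.$$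
   Context: This models a two-armed selector that, at each of $M$ iterations, chooses between two actions FE and HPO. The selection rule above is the reduction, under a neutral reward signal (equal constant exploitation values for both arms), of the rule choosing $\arg\max_{a\in\{\mathrm{FE},\mathrm{HPO}\}} \omega_a(m)\frac{\sqrt{N_{\mathrm{FE}}(m)+N_{\mathrm{HPO}}(m)}}{1+N_a(m)}$ after dividing out the common factor; $I(m+1)=1$ means FE is chosen at iteration $m+1$, and ties are resolved in favor of HPO. $N_a(m)$ is the number of times action $a$ has been chosen in the first $m$ iterations, so $N_{\mathrm{FE}}(m)+N_{\mathrm{HPO}}(m)=m$. *)

theory Defs
  imports Complex_Main
begin

definition delta :: "real \<Rightarrow> nat \<Rightarrow> real" where
  "delta p1 M = (p1 - 1/2) / real M"

definition omega_FE :: "real \<Rightarrow> nat \<Rightarrow> nat \<Rightarrow> real" where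
  "omega_FE p1 M m = p1 - delta p1 M * real m"

definition omega_HPO :: "real \<Rightarrow> nat \<Rightarrow> nat \<Rightarrow> real" where
  "omega_HPO p1 M m = (1 - p1) + delta p1 M * real m"

fun counts :: "real \<Rightarrow> nat \<Rightarrow> nat \<Rightarrow> nat \<times> nat" where
  "counts p1 M 0 = (0, 0)"
| "counts p1 M (Suc m) =
     (let (nf, nh) = counts p1 M m in
      if omega_FE p1 M m / (1 + real nf) > omega_HPO p1 M m / (1 + real nh)
      then (nf + 1, nh) else (nf, nh + 1))"

definition N_FE :: "real \<Rightarrow> nat \<Rightarrow> nat \<Rightarrow> nat" where
  "N_FE p1 M m = fst (counts p1 M m)"

definition N_HPO :: "real \<Rightarrow> nat \<Rightarrow> nat \<Rightarrow> nat" where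
  "N_HPO p1 M m = snd (counts p1 M m)"

end

theory Submission
  imports Defs
begin

lemma counts_sum: "fst (counts p1 M m) + snd (counts p1 M m) = m"
  by (induction m) (auto simp: Let_def split: prod.splits)

lemma counts_step:
  assumes "omega_FE p1 M m + omega_HPO p1 M m = 1"
  shows "fst (counts p1 M (Suc m)) =
     (if real (fst (counts p1 M m)) < omega_FE p1 M m * (real m + 2) - 1
      then fst (counts p1 M m) + 1 else fst (counts p1 M m))"
proof -
  obtain nf nh where c: "counts p1 M m = (nf, nh)" by (cases "counts p1 M m")
  have s: "nf + nh = m" using counts_sum[of p1 M m] c by simp
  let ?a = "omega_FE p1 M m" and ?b = "omega_HPO p1 M m"
  have "(?a / (1 + real nf) > ?b / (1 + real nh)) = (?a * (1 + real nh) > ?b * (1 + real nf))"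
    by (simp add: divide_simps add_pos_pos)
  also have "\<dots> = (real nf < ?a * (real m + 2) - 1)"
  proof -
    have "real nh = real m - real nf" using s by auto
    moreover have "?b = 1 - ?a" using assms by simp
    ultimately show ?thesis by (simp only:) (simp add: algebra_simps)
  qed
  finally show ?thesis using c by (simp add: Let_def)
qed

theorem theorem1:
  fixes M :: nat and p1 :: real
  assumes "M \<ge> 1"
    and "1/2 \<le> p1"
    and "p1 < (real M + 3/2) / (real M + 3)"
  shows "real (N_FE p1 M M) \<in> {of_int \<lfloor>real M / 2\<rfloor>, of_int \<lceil>real M / 2\<rceil>}
       \<and> real (N_HPO p1 M M) \<in> {of_int \<lfloor>real M / 2\<rfloor>, of_int \<lceil>real M / 2\<rceil>}"
proof -
  define d where "d = delta p1 M"
  define g where "g = (\<lambda>m::nat. (p1 - d * real m) * (real m + 2) - 1)"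
  define nf where "nf = (\<lambda>m. fst (counts p1 M m))"
  have Mpos: "real M > 0" using assms(1) by simp
  have p1lt: "p1 < 1"
  proof (rule ccontr)
    assume "\<not> p1 < 1"
    then have "1 * (real M + 3) \<le> p1 * (real M + 3)" using Mpos by (intro mult_right_mono) auto
    then show False using assms(3) Mpos by (simp add: field_simps)
  qed
  have d0: "d \<ge> 0" unfolding d_def delta_def using assms(2) by simp
  have dM: "d * real M = p1 - 1/2" unfolding d_def delta_def using Mpos by simp
  have sum1: "\<And>m. omega_FE p1 M m + omega_HPO p1 M m = 1"
    by (simp add: omega_FE_def omega_HPO_def)
  have stp: "\<And>m. nf (Suc m) = (if real (nf m) < g m then nf m + 1 else nf m)"
    unfolding nf_def g_def d_def using counts_step[OF sum1] by (simp add: omega_FE_def)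
  have dg: "0 < g (Suc m) - g m \<and> g (Suc m) - g m < 1" if "Suc m < M" for m
  proof -
    have e: "g (Suc m) - g m = p1 - d * (2 * real m + 3)"
      unfolding g_def by (simp add: algebra_simps)
    have "d * (2 * real m + 3) \<le> d * (2 * real M)"
      using d0 that by (intro mult_left_mono) auto
    then have "d * (2 * real m + 3) \<le> 2 * p1 - 1" using dM by simp
    moreover have "d * (2 * real m + 3) \<ge> 0" using d0 by simp
    ultimately show ?thesis using e p1lt by simp
  qed
  have inv: "g (m - 1) \<le> real (nf m) \<and> real (nf m) \<le> g (m - 1) + 1" if "1 \<le> m" "m \<le> M" for m
    using that
  proof (induction m rule: dec_induct)
    case base
    have g0: "g 0 = 2 * p1 - 1" unfolding g_def by simp
    have "nf 0 = 0" unfolding nf_def by simp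
    then show ?case using stp[of 0] g0 assms(2) p1lt by auto
  next
    case (step m)
    then obtain k where k: "m = Suc k" by (cases m) auto
    have IH: "g k \<le> real (nf m) \<and> real (nf m) \<le> g k + 1" using step k by simp
    have "0 < g m - g k \<and> g m - g k < 1" using dg[of k] k step by simp
    then show ?case using IH stp[of m] by auto
  qed
  have gM: "real M / 2 - 1/2 \<le> g (M - 1) \<and> g (M - 1) < real M / 2"
  proof -
    have e: "g (M - 1) = (real M - 1) / 2 + d * (real M + 1)"
    proof -
      have p: "p1 = d * real M + 1/2" using dM by simp
      show ?thesis unfolding g_def using assms(1) by (simp add: of_nat_diff p field_simps)
    qed
    have "(2 * p1 - 1) * (real M + 1) < real M"
    proof -
      have "p1 * (2 * real M + 6) < 2 * real M + 3" using assms(3) Mpos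
        by (simp add: field_simps)
      then have "2 * (p1 * real M) + 6 * p1 < 2 * real M + 3" by (simp add: algebra_simps)
      then have "2 * (p1 * real M) + 2 * p1 < 2 * real M + 1" using assms(2) by linarith
      then show ?thesis by (simp add: algebra_simps)
    qed
    then have "(p1 - 1/2) * (real M + 1) < real M * (1/2)" by (simp add: field_simps)
    moreover have "real M * (d * (real M + 1)) = (p1 - 1/2) * (real M + 1)"
      by (subst dM[symmetric]) (simp add: algebra_simps)
    ultimately have "real M * (d * (real M + 1)) < real M * (1/2)" by linarith
    then have "d * (real M + 1) < 1/2" using Mpos mult_less_cancel_left_pos by blast
    moreover have "d * (real M + 1) \<ge> 0" using d0 by simp
    ultimately show ?thesis using e by (simp add: field_simps)
  qed
  have b: "real M / 2 - 1/2 \<le> real (nf M) \<and> real (nf M) < real M / 2 + 1"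
    using inv[of M] assms(1) gM by auto
  have hp: "N_HPO p1 M M = M - nf M" "N_FE p1 M M = nf M"
    using counts_sum[of p1 M M] unfolding N_HPO_def N_FE_def nf_def by auto
  show ?thesis
  proof (cases "even M")
    case True
    then obtain k where k: "M = 2 * k" by auto
    have "nf M = k" using b k by auto
    then show ?thesis using hp k by simp
  next
    case False
    then obtain k where k: "M = 2 * k + 1" using oddE by blast
    have fl: "\<lfloor>real M / 2\<rfloor> = int k" "\<lceil>real M / 2\<rceil> = int k + 1"
      using k by (simp_all add: floor_eq_iff ceiling_eq_iff)
    have "real k \<le> real (nf M) \<and> real (nf M) < real k + 2" using b k by (simp add: field_simps)
    then have "k \<le> nf M \<and> nf M < k + 2" by linarith
    then have "nf M = k \<or> nf M = k + 1" by auto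
    then show ?thesis using hp k fl by auto
  qed
qed

end
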